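(* Let $\lambda>2$ be such that $\lambda^2$ is an eigenvalue of $-\Delta_D$ with eigenfunction $\psi_\lambda$, let $T>0$, and let $f_\lambda^T$ be the unique solution on $\mathbb{R}$ (distributional sense), decaying as $|z|\to\infty$, of $$(z^2+T^{-2})f''(z)+6zf'(z)+(4-\lambda^2)f(z)=2\pi\,\psi_\lambda(p_D)\,\delta_0(z).$$ Then $f_\lambda^T$ is nonincreasing on $(-\infty,0]$ and nondecreasing on $[0,\infty)$.
   Context: $(D,\omega_D)$ is a compact Riemann surface of genus at least two with $\mathrm{Ric}\,\omega_D=-\omega_D$, $\Delta_D$ its Laplacian, $p_D\in D$ fixed. Eigenfunctions satisfy $\Delta_D\psi_\lambda=-\lambda^2\psi_\lambda$, $\int_D|\psi_\lambda|^2\omega_D=1$, $\psi_\lambda(p_D)\geq0$. $\delta_0$ is the Dirac delta at $0$. *)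

theory Defs
  imports "HOL-Analysis.Analysis"
begin

definition test_function :: "(real \<Rightarrow> real) \<Rightarrow> bool" where
  "test_function \<phi> \<longleftrightarrow>
     (\<forall>k x. ((deriv ^^ k) \<phi>) differentiable (at x)) \<and> bounded {x. \<phi> x \<noteq> 0}"

text \<open>f solves, in the sense of distributions on the real line,
  (z^2 + T^-2) f'' + 6 z f' + (4 - lambda^2) f = 2 pi c delta_0,
  i.e. pairing f against the formal adjoint of the operator applied to any
  test function gives 2 pi c phi(0).\<close>
definition distr_solution :: "real \<Rightarrow> real \<Rightarrow> real \<Rightarrow> (real \<Rightarrow> real) \<Rightarrow> bool" where
  "distr_solution lam T c f \<longleftrightarrow>
     (\<forall>\<phi>. test_function \<phi> \<longrightarrow>
        (let Lphi = (\<lambda>z. deriv (deriv (\<lambda>x. (x\<^sup>2 + 1 / T\<^sup>2) * \<phi> x)) z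
                     - deriv (\<lambda>x. 6 * x * \<phi> x) z
                     + (4 - lam\<^sup>2) * \<phi> z)
         in integrable lborel (\<lambda>z. f z * Lphi z) \<and>
            (\<integral>z. f z * Lphi z \<partial>lborel) = 2 * pi * c * \<phi> 0))"

end

theory Submission
  imports Defs "HOL-Computational_Algebra.Polynomial"
begin

lemma exp_ge_power_fact:
  fixes s :: real assumes "0 \<le> s"
  shows "s ^ k / fact k \<le> exp s"
proof -
  have "summable (\<lambda>n. s ^ n /\<^sub>R fact n)" by (rule summable_exp_generic)
  then have "sum (\<lambda>n. s ^ n /\<^sub>R fact n) {k} \<le> suminf (\<lambda>n. s ^ n /\<^sub>R fact n)"
    by (intro sum_le_suminf) (auto simp: assms)
  then show ?thesis by (simp add: exp_def divide_inverse mult.commute)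
qed

definition uu :: "real \<Rightarrow> real" where "uu x = 1 / (1 - x\<^sup>2)"

definition bf :: "real poly \<Rightarrow> nat \<Rightarrow> real \<Rightarrow> real" where
  "bf P n x = (if x\<^sup>2 < 1 then poly P x * uu x ^ n * exp (- uu x) else 0)"

definition Pn :: "real poly \<Rightarrow> nat \<Rightarrow> real poly" where
  "Pn P n = pderiv P * [:1,0,-1:]^2 + smult (2 * real n) ([:0,1:] * P * [:1,0,-1:])
     - smult 2 ([:0,1:] * P)"

lemma uu_deriv: "x\<^sup>2 < 1 \<Longrightarrow> (uu has_real_derivative 2 * x * uu x ^ 2) (at x)"
proof -
  assume x: "x\<^sup>2 < 1"
  then have ne: "1 - x\<^sup>2 \<noteq> 0" by simp
  have "((\<lambda>y. 1 / (1 - y\<^sup>2)) has_real_derivative - (- (2 * x)) / (1 - x\<^sup>2)\<^sup>2) (at x)"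
    using x by (auto intro!: derivative_eq_intros simp: ne power2_eq_square)
  then show ?thesis unfolding uu_def[abs_def]
    by (simp add: power_divide power2_eq_square)
qed

lemma bf_inner_deriv:
  assumes x: "x\<^sup>2 < 1"
  shows "((\<lambda>y. poly P y * uu y ^ n * exp (- uu y)) has_real_derivative
          poly (Pn P n) x * uu x ^ (n + 2) * exp (- uu x)) (at x)"
proof -
  have ne: "1 - x\<^sup>2 \<noteq> 0" using x by simp
  define v where "v = uu x"
  define w where "w = 1 - x\<^sup>2"
  have vw: "v * w = 1" using ne by (simp add: v_def w_def uu_def)
  have D: "((\<lambda>y. poly P y * uu y ^ n * exp (- uu y)) has_real_derivative
     poly (pderiv P) x * v ^ n * exp (- v) + poly P x * (real n * v ^ (n - 1) * (2 * x * v ^ 2)) * exp (- v)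
     + poly P x * v ^ n * (exp (- v) * (- (2 * x * v ^ 2)))) (at x)"
    unfolding v_def
    by (auto intro!: derivative_eq_intros uu_deriv[OF x] DERIV_power[OF uu_deriv[OF x]] simp: algebra_simps)
  have eq: "poly P x * (real n * v ^ (n - 1) * (2 * x * v ^ 2)) = 2 * real n * x * poly P x * v ^ (n+1)"
  proof (cases n)
    case 0 then show ?thesis by simp
  next
    case (Suc m) then show ?thesis by (simp add: power2_eq_square algebra_simps)
  qed
  have p: "poly (Pn P n) x = poly (pderiv P) x * w\<^sup>2 + 2 * real n * x * poly P x * w - 2 * x * poly P x"
    by (simp add: Pn_def w_def algebra_simps power2_eq_square)
  have "poly (Pn P n) x * v ^ (n + 2) = poly (pderiv P) x * v ^ n + 2 * real n * x * poly P x * v ^ (n+1)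
          - 2 * x * poly P x * v ^ (n+2)"
  proof -
    have a: "w\<^sup>2 * v ^ (n + 2) = v ^ n" using vw
    proof -
      have "w\<^sup>2 * v ^ (n + 2) = (v * w)^2 * v ^ n" by (simp add: power2_eq_square power_add algebra_simps)
      then show ?thesis using vw by simp
    qed
    have b: "w * v ^ (n + 2) = v ^ (n+1)"
    proof -
      have "w * v ^ (n + 2) = (v * w) * v ^ (n+1)" by (simp add: power_add algebra_simps power2_eq_square)
      then show ?thesis using vw by simp
    qed
    have "poly (Pn P n) x * v ^ (n + 2) = poly (pderiv P) x * (w\<^sup>2 * v ^ (n + 2))
       + 2 * real n * x * poly P x * (w * v ^ (n + 2)) - 2 * x * poly P x * v ^ (n+2)"
      unfolding p by (simp add: algebra_simps)
    then show ?thesis unfolding a b .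
  qed
  note E = this
  have "poly (pderiv P) x * v ^ n * exp (- v) + poly P x * (real n * v ^ (n - 1) * (2 * x * v ^ 2)) * exp (- v)
     + poly P x * v ^ n * (exp (- v) * (- (2 * x * v ^ 2)))
     = (poly (pderiv P) x * v ^ n + 2 * real n * x * poly P x * v ^ (n+1)
          - 2 * x * poly P x * v ^ (n+2)) * exp (- v)"
    unfolding eq by (simp add: algebra_simps power_add power2_eq_square)
  also have "\<dots> = poly (Pn P n) x * v ^ (n + 2) * exp (- v)"
    by (simp only: E)
  finally show ?thesis using D unfolding v_def by simp
qed

lemma pow_exp_bound:
  fixes v :: real assumes v: "0 < v"
  shows "v ^ n * exp (- v) \<le> fact (n + 2) / v\<^sup>2"
proof -
  have e: "v ^ (n+2) / fact (n+2) \<le> exp v" using exp_ge_power_fact[of v "n+2"] v by simp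
  have "v ^ n * exp (- v) = v ^ n / exp v" by (simp add: exp_minus field_simps)
  also have "\<dots> \<le> v ^ n / (v ^ (n+2) / fact (n+2))"
    using e v by (intro divide_left_mono) auto
  also have "\<dots> = fact (n + 2) / v\<^sup>2" using v by (simp add: field_simps power_add power2_eq_square)
  finally show ?thesis .
qed

lemma poly_bound_interval:
  obtains M :: real where "M \<ge> 0" "\<And>y. y \<in> {-1..1} \<Longrightarrow> \<bar>poly P y\<bar> \<le> M"
proof -
  have "compact ((\<lambda>y. poly P y) ` {-1..1::real})"
    by (intro compact_continuous_image) (auto intro!: continuous_intros)
  then obtain B where "B > 0" "\<forall>z \<in> (\<lambda>y. poly P y) ` {-1..1::real}. norm z \<le> B"
    using compact_imp_bounded bounded_pos by metis
  then show ?thesis using that[of B] by auto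
qed

lemma bf_deriv: "(bf P n has_real_derivative bf (Pn P n) (n + 2) x) (at x)"
proof (cases "x\<^sup>2 < 1")
  case True
  have e: "bf (Pn P n) (n + 2) x = poly (Pn P n) x * uu x ^ (n + 2) * exp (- uu x)"
    using True by (simp add: bf_def)
  show ?thesis unfolding e
  proof (rule has_field_derivative_transform_within_open[OF bf_inner_deriv[OF True], of "{y. y\<^sup>2 < 1}"])
    show "open {y::real. y\<^sup>2 < 1}" by (intro open_Collect_less) (auto intro!: continuous_intros)
  qed (use True in \<open>auto simp: bf_def\<close>)
next
  case False
  note F = False
  show ?thesis
  proof (cases "x\<^sup>2 > 1")
    case True
    have "((\<lambda>y. 0::real) has_real_derivative 0) (at x)" by simp
    then have "(bf P n has_real_derivative 0) (at x)"
    proof (rule has_field_derivative_transform_within_open[of _ _ _ "{y. y\<^sup>2 > 1}"])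
      show "open {y::real. y\<^sup>2 > 1}" by (intro open_Collect_less) (auto intro!: continuous_intros)
    qed (use True in \<open>auto simp: bf_def\<close>)
    then show ?thesis using True by (simp add: bf_def)
  next
    case False
    then have x1: "x\<^sup>2 = 1" using F by simp
    have bx: "bf (Pn P n) (n + 2) x = 0" "bf P n x = 0" using x1 by (auto simp: bf_def)
    obtain M where M: "M \<ge> 0" "\<And>y. y \<in> {-1..1} \<Longrightarrow> \<bar>poly P y\<bar> \<le> M"
      using poly_bound_interval by blast
    define C where "C = 4 * M * fact (n + 2)"
    have C: "C \<ge> 0" using M by (simp add: C_def)
    have bound: "norm ((bf P n y - bf P n x) / (y - x)) \<le> C * \<bar>y - x\<bar>" if yx: "y \<noteq> x" for y
    proof (cases "y\<^sup>2 < 1")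
      case False then show ?thesis using C bx by (simp add: bf_def)
    next
      case True
      define v where "v = uu y"
      have w: "0 < 1 - y\<^sup>2" using True by simp
      have v: "0 < v" "v = 1 / (1 - y\<^sup>2)" using w by (auto simp: v_def uu_def)
      have "\<bar>y\<bar> < 1" using True by (simp add: abs_square_less_1)
      then have y1: "y \<in> {-1..1}" by auto
      have "\<bar>x + y\<bar> \<le> 2" using x1 y1 by (auto simp: power2_eq_1_iff)
      have wx: "1 - y\<^sup>2 \<le> 2 * \<bar>y - x\<bar>"
      proof -
        have "1 - y\<^sup>2 = \<bar>x - y\<bar> * \<bar>x + y\<bar>" using x1 w by (simp add: power2_eq_square algebra_simps abs_mult[symmetric])
        also have "\<dots> \<le> \<bar>x - y\<bar> * 2" using \<open>\<bar>x + y\<bar> \<le> 2\<close> by (intro mult_left_mono) auto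
        finally show ?thesis by (simp add: abs_minus_commute)
      qed
      have "\<bar>bf P n y\<bar> = \<bar>poly P y\<bar> * (v ^ n * exp (- v))"
        using True v by (simp add: bf_def v_def abs_mult)
      also have "\<dots> \<le> M * (fact (n+2) / v\<^sup>2)"
        using M(2)[OF y1] pow_exp_bound[OF v(1), of n] M(1) v
        by (intro mult_mono) auto
      also have "\<dots> = M * fact (n+2) * (1 - y\<^sup>2)\<^sup>2"
      proof -
        have "fact (n+2) / v\<^sup>2 = fact (n+2) * (1 - y\<^sup>2)\<^sup>2" unfolding v(2) using w
          by (simp add: power_divide)
        then show ?thesis by simp
      qed
      also have "\<dots> \<le> M * fact (n+2) * (2 * \<bar>y - x\<bar>)\<^sup>2"
        using M(1) w wx by (intro mult_left_mono power_mono) auto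
      also have "M * fact (n+2) * (2 * \<bar>y - x\<bar>)\<^sup>2 = C * \<bar>y - x\<bar> * \<bar>y - x\<bar>"
        unfolding C_def power2_eq_square by (simp only: mult_ac)
      finally have "\<bar>bf P n y\<bar> \<le> C * \<bar>y - x\<bar> * \<bar>y - x\<bar>" .
      then show ?thesis using yx bx by (simp add: abs_divide divide_le_eq)
    qed
    have "((\<lambda>y. (bf P n y - bf P n x) / (y - x)) \<longlongrightarrow> 0) (at x)"
    proof (rule Lim_null_comparison)
      show "\<forall>\<^sub>F y in at x. norm ((bf P n y - bf P n x) / (y - x)) \<le> C * \<bar>y - x\<bar>"
        using bound by (auto simp: eventually_at_filter)
      have "((\<lambda>y. C * \<bar>y - x\<bar>) \<longlongrightarrow> C * \<bar>x - x\<bar>) (at x)"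
        by (intro tendsto_intros)
      then show "((\<lambda>y. C * \<bar>y - x\<bar>) \<longlongrightarrow> 0) (at x)" by simp
    qed
    then show ?thesis using bx by (simp add: has_field_derivative_iff)
  qed
qed

definition smooth :: "(real \<Rightarrow> real) \<Rightarrow> bool" where
  "smooth \<phi> \<longleftrightarrow> (\<forall>k x. ((deriv ^^ k) \<phi>) differentiable (at x))"

lemma test_function_smooth: "test_function \<phi> \<longleftrightarrow> smooth \<phi> \<and> bounded {x. \<phi> x \<noteq> 0}"
  by (simp add: test_function_def smooth_def)

lemma smooth_diff: "smooth \<phi> \<Longrightarrow> \<phi> differentiable (at x)"
  unfolding smooth_def by (metis funpow_0)

lemma smooth_deriv: "smooth \<phi> \<Longrightarrow> smooth (deriv \<phi>)"
  unfolding smooth_def by (metis funpow_Suc_right o_apply)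

lemma smooth_has_deriv: "smooth \<phi> \<Longrightarrow> (\<phi> has_real_derivative deriv \<phi> x) (at x)"
  using smooth_diff DERIV_deriv_iff_real_differentiable by blast

lemma smooth_cont: "smooth \<phi> \<Longrightarrow> continuous_on UNIV \<phi>"
  by (meson continuous_at_imp_continuous_on differentiable_imp_continuous_within smooth_diff)

lemma smooth_isCont: "smooth \<phi> \<Longrightarrow> isCont \<phi> x"
  by (simp add: differentiable_imp_continuous_within smooth_diff)

lemma deriv_bf: "deriv (bf P n) = bf (Pn P n) (n + 2)"
  using bf_deriv DERIV_imp_deriv by blast

lemma smooth_bf: "smooth (bf P n)"
proof -
  have "\<exists>Q m. (deriv ^^ k) (bf P n) = bf Q m" for k
  proof (induction k arbitrary: P n)
    case 0 then show ?case by auto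
  next
    case (Suc k)
    obtain Q m where "(deriv ^^ k) (bf (Pn P n) (n+2)) = bf Q m" using Suc by blast
    then show ?case by (metis funpow_Suc_right o_apply deriv_bf)
  qed
  then show ?thesis unfolding smooth_def
    by (metis bf_deriv real_differentiable_def)
qed

lemma bf_zero: "x\<^sup>2 \<ge> 1 \<Longrightarrow> bf P n x = 0"
  by (simp add: bf_def)

lemma test_bf: "test_function (bf P n)"
proof -
  have "{x. bf P n x \<noteq> 0} \<subseteq> cball 0 1"
    by (auto simp: bf_def abs_square_less_1 dist_real_def)
  then show ?thesis unfolding test_function_smooth using smooth_bf bounded_subset by blast
qed

definition rho :: "real \<Rightarrow> real" where "rho = bf 1 0"

lemma rho_nonneg: "rho x \<ge> 0" by (simp add: rho_def bf_def)
lemma rho_zero: "\<bar>x\<bar> \<ge> 1 \<Longrightarrow> rho x = 0"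
  by (simp add: rho_def bf_def abs_square_less_1)
lemma rho_pos0: "rho 0 > 0" by (simp add: rho_def bf_def)
lemma test_rho: "test_function rho" by (simp add: rho_def test_bf)

lemma smooth_affine_comp:
  assumes "smooth \<phi>"
  shows "(deriv ^^ k) (\<lambda>y. \<phi> (a * y + b)) = (\<lambda>y. a ^ k * (deriv ^^ k) \<phi> (a * y + b))"
proof (induction k)
  case 0 then show ?case by simp
next
  case (Suc k)
  have d: "((\<lambda>y. a ^ k * (deriv ^^ k) \<phi> (a * y + b)) has_real_derivative
           a ^ Suc k * (deriv ^^ Suc k) \<phi> (a * y + b)) (at y)" for y
  proof -
    have "((deriv ^^ k) \<phi>) differentiable (at (a * y + b))" using assms by (simp add: smooth_def)
    then have D: "((deriv ^^ k) \<phi> has_real_derivative deriv ((deriv ^^ k) \<phi>) (a * y + b)) (at (a * y + b))"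
      using DERIV_deriv_iff_real_differentiable by blast
    have L: "((\<lambda>y. a * y + b) has_real_derivative a) (at y)"
      by (auto intro!: derivative_eq_intros)
    have "((\<lambda>y. a ^ k * (deriv ^^ k) \<phi> (a * y + b)) has_real_derivative
           a ^ k * (deriv ((deriv ^^ k) \<phi>) (a * y + b) * a)) (at y)"
      by (rule DERIV_cmult[OF DERIV_chain2[OF D L]])
    then show ?thesis by (simp add: algebra_simps)
  qed
  show ?case using Suc DERIV_imp_deriv[OF d] by (auto intro!: ext)
qed

lemma smooth_affine: "smooth \<phi> \<Longrightarrow> smooth (\<lambda>y. \<phi> (a * y + b))"
proof -
  assume s: "smooth \<phi>"
  show ?thesis unfolding smooth_def smooth_affine_comp[OF s]
  proof (intro allI)
    fix k x
    have "((deriv ^^ k) \<phi>) differentiable (at (a * x + b))" using s by (simp add: smooth_def)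
    then obtain D where D: "((deriv ^^ k) \<phi> has_real_derivative D) (at (a * x + b))"
      using real_differentiable_def by blast
    have L: "((\<lambda>y. a * y + b) has_real_derivative a) (at x)"
      by (auto intro!: derivative_eq_intros)
    have "((\<lambda>y. a ^ k * (deriv ^^ k) \<phi> (a * y + b)) has_real_derivative a ^ k * (D * a)) (at x)"
      by (rule DERIV_cmult[OF DERIV_chain2[OF D L]])
    then show "(\<lambda>y. a ^ k * (deriv ^^ k) \<phi> (a * y + b)) differentiable (at x)"
      using real_differentiable_def by blast
  qed
qed

lemma smooth_lincomb_deriv:
  assumes "smooth f" "smooth g"
  shows "(deriv ^^ k) (\<lambda>x. a * f x + b * g x) = (\<lambda>x. a * (deriv ^^ k) f x + b * (deriv ^^ k) g x)"
proof (induction k)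
  case 0 then show ?case by simp
next
  case (Suc k)
  have "((\<lambda>x. a * (deriv ^^ k) f x + b * (deriv ^^ k) g x) has_real_derivative
         a * (deriv ^^ Suc k) f x + b * (deriv ^^ Suc k) g x) (at x)" for x
  proof -
    have "((deriv ^^ k) f) differentiable (at x)" "((deriv ^^ k) g) differentiable (at x)"
      using assms by (auto simp: smooth_def)
    then show ?thesis
      by (auto intro!: derivative_eq_intros simp: DERIV_deriv_iff_real_differentiable[symmetric])
  qed
  then show ?case using Suc DERIV_imp_deriv by (auto intro!: ext)
qed

lemma smooth_lincomb: "smooth f \<Longrightarrow> smooth g \<Longrightarrow> smooth (\<lambda>x. a * f x + b * g x)"
  unfolding smooth_def
  apply (subst smooth_lincomb_deriv[unfolded smooth_def], assumption, assumption)
  by (auto intro!: derivative_intros simp: smooth_def)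

lemma test_lincomb:
  assumes "test_function f" "test_function g"
  shows "test_function (\<lambda>x. a * f x + b * g x)"
proof -
  have "{x. a * f x + b * g x \<noteq> 0} \<subseteq> {x. f x \<noteq> 0} \<union> {x. g x \<noteq> 0}" by auto
  then show ?thesis using assms smooth_lincomb unfolding test_function_smooth
    by (meson bounded_Un bounded_subset)
qed

lemma test_support:
  assumes "test_function \<phi>"
  obtains R where "R > 0" "\<And>k x. \<bar>x\<bar> \<ge> R \<Longrightarrow> (deriv ^^ k) \<phi> x = 0"
proof -
  obtain B where B: "\<And>x. x \<in> {x. \<phi> x \<noteq> 0} \<Longrightarrow> \<bar>x\<bar> \<le> B"
    using assms unfolding test_function_def bounded_iff by auto
  have z: "(deriv ^^ k) \<phi> x = 0" if "\<bar>x\<bar> > \<bar>B\<bar>" for k x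
    using that
  proof (induction k arbitrary: x)
    case 0 then show ?case using B by force
  next
    case (Suc k)
    have "((\<lambda>_. 0) has_real_derivative 0) (at x)" by simp
    then have "((deriv ^^ k) \<phi> has_real_derivative 0) (at x)"
    proof (rule has_field_derivative_transform_within_open[of _ _ _ "{y. \<bar>y\<bar> > \<bar>B\<bar>}"])
      show "open {y::real. \<bar>y\<bar> > \<bar>B\<bar>}" by (intro open_Collect_less) (auto intro!: continuous_intros)
    qed (use Suc in auto)
    then show ?case by (simp add: DERIV_imp_deriv)
  qed
  show ?thesis by (rule that[of "\<bar>B\<bar> + 1"]) (auto intro!: z)
qed

definition bump :: "real \<Rightarrow> real \<Rightarrow> real \<Rightarrow> real" where
  "bump x0 e y = rho ((1/e) * y + (- x0 / e))"

lemma bump_nonneg: "bump x0 e y \<ge> 0" by (simp add: bump_def rho_nonneg)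

lemma bump_zero: "e > 0 \<Longrightarrow> \<bar>y - x0\<bar> \<ge> e \<Longrightarrow> bump x0 e y = 0"
  unfolding bump_def
  by (rule rho_zero) (simp add: abs_divide diff_divide_distrib[symmetric] divide_le_eq)

lemma bump_pos: "e > 0 \<Longrightarrow> bump x0 e x0 > 0"
  by (simp add: bump_def rho_pos0)

lemma test_bump:
  assumes e: "e > 0" shows "test_function (bump x0 e)"
proof -
  have s: "smooth rho" using test_rho test_function_smooth by blast
  have "{y. bump x0 e y \<noteq> 0} \<subseteq> cball x0 e"
    using bump_zero[OF e] by (force simp: dist_real_def)
  moreover have "smooth (bump x0 e)" unfolding bump_def[abs_def] by (rule smooth_affine[OF s])
  ultimately show ?thesis unfolding test_function_smooth
    using bounded_subset[OF bounded_cball] by blast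
qed

lemma LB:
  fixes h :: "real \<Rightarrow> real"
  assumes c: "continuous_on UNIV h" and z: "\<And>x. \<bar>x\<bar> \<ge> R \<Longrightarrow> h x = 0"
  shows "integrable lborel h" "integral\<^sup>L lborel h = integral {-R..R} h"
proof -
  have eq: "h = (\<lambda>x. indicator {-R..R} x *\<^sub>R h x)"
  proof
    fix x show "h x = indicator {-R..R} x *\<^sub>R h x"
      using z[of x] by (cases "x \<in> {-R..R}") auto
  qed
  have i: "integrable lborel (\<lambda>x. indicator {-R..R} x *\<^sub>R h x)"
    by (rule borel_integrable_compact) (auto intro: continuous_on_subset[OF c])
  then show "integrable lborel h" using eq by simp
  have si: "set_integrable lborel {-R..R} h" using i by (simp add: set_integrable_def)
  have "integral\<^sup>L lborel h = (LINT x:{-R..R}|lborel. h x)"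
    by (subst eq) (simp add: set_lebesgue_integral_def)
  also have "\<dots> = integral {-R..R} h" by (rule set_borel_integral_eq_integral(2)[OF si])
  finally show "integral\<^sup>L lborel h = integral {-R..R} h" .
qed

lemma integrable_cont_support:
  fixes h :: "real \<Rightarrow> real"
  assumes c: "continuous_on UNIV h" and z: "\<And>x. \<bar>x\<bar> \<ge> R \<Longrightarrow> h x = 0"
  shows "integrable lborel h"
  using LB[OF assms] by simp

lemma pos_integral:
  fixes h :: "real \<Rightarrow> real"
  assumes c: "continuous_on UNIV h" and z: "\<And>x. \<bar>x\<bar> \<ge> R \<Longrightarrow> h x = 0"
    and nn: "\<And>x. h x \<ge> 0" and p: "h x0 > 0"
  shows "integral\<^sup>L lborel h > 0"
proof -
  have "isCont h x0" using c by (simp add: continuous_on_eq_continuous_at)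
  then obtain d where d: "d > 0" "\<And>x. dist x x0 < d \<Longrightarrow> dist (h x) (h x0) < h x0 / 2"
    using p by (metis continuous_at_eps_delta half_gt_zero)
  define d' where "d' = d / 2"
  have d': "d' > 0" "d' < d" using d by (auto simp: d'_def)
  have low: "h x0 / 2 * indicator {x0 - d'..x0 + d'} x \<le> h x" for x
  proof (cases "x \<in> {x0 - d'..x0 + d'}")
    case True
    then have "dist x x0 < d" using d' by (auto simp: dist_real_def)
    then have "\<bar>h x - h x0\<bar> < h x0 / 2" using d(2) by (simp add: dist_real_def)
    then have "h x > h x0 / 2" using abs_less_iff[of "h x - h x0" "h x0/2"] by linarith
    then show ?thesis using True by simp
  next
    case False then show ?thesis using nn by simp
  qed
  have "integral\<^sup>L lborel (\<lambda>x. h x0 / 2 * indicator {x0 - d'..x0 + d'} x) \<le> integral\<^sup>L lborel h"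
  proof (rule integral_mono)
    show "integrable lborel (\<lambda>x. h x0 / 2 * indicator {x0 - d'..x0 + d'} x)"
      by (intro integrable_mult_right integrable_real_indicator) (auto simp: emeasure_lborel_Icc_eq)
  qed (use low integrable_cont_support[OF c z] in auto)
  moreover have "integral\<^sup>L lborel (\<lambda>x. h x0 / 2 * indicator {x0 - d'..x0 + d'} x) = h x0 / 2 * (2 * d')"
    using d' by simp
  moreover have "h x0 / 2 * (2 * d') > 0" using p d' by simp
  ultimately show ?thesis by linarith
qed

definition si :: "(real \<Rightarrow> real) \<Rightarrow> real \<Rightarrow> real \<Rightarrow> real" where
  "si g a x = (if a \<le> x then integral {a..x} g else - integral {x..a} g)"

lemma si_base: "si g a a = 0" by (simp add: si_def)

lemma si_eq:
  assumes c: "continuous_on UNIV g" and l: "l \<le> a" "l \<le> x"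
  shows "si g a x = integral {l..x} g - integral {l..a} g"
proof -
  have int: "g integrable_on {u..v}" for u v by (rule integrable_continuous_real) (auto intro: continuous_on_subset[OF c])
  show ?thesis
  proof (cases "a \<le> x")
    case True
    then have "integral {l..a} g + integral {a..x} g = integral {l..x} g"
      using l True by (intro Henstock_Kurzweil_Integration.integral_combine int) auto
    then show ?thesis using True by (simp add: si_def)
  next
    case False
    then have "integral {l..x} g + integral {x..a} g = integral {l..a} g"
      using l False by (intro Henstock_Kurzweil_Integration.integral_combine int) auto
    then show ?thesis using False by (simp add: si_def)
  qed
qed

lemma si_deriv:
  assumes c: "continuous_on UNIV g"
  shows "(si g a has_real_derivative g x) (at x)"
proof -
  define l where "l = min a x - 1"
  define u where "u = x + 1"
  have D: "((\<lambda>y. integral {l..y} g) has_real_derivative g x) (at x within {l..u})"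
    by (rule integral_has_real_derivative) (auto simp: l_def u_def intro: continuous_on_subset[OF c])
  have "x \<in> interior {l..u}" by (simp add: l_def u_def)
  then have D2: "((\<lambda>y. integral {l..y} g) has_real_derivative g x) (at x)"
    using D at_within_interior by metis
  have D3: "((\<lambda>y. integral {l..y} g - integral {l..a} g) has_real_derivative g x) (at x)"
    using DERIV_diff[OF D2 DERIV_const] by simp
  show ?thesis
  proof (rule has_field_derivative_transform_within_open[OF D3, of "{l<..}"])
    fix y assume "y \<in> {l<..}"
    then show "integral {l..y} g - integral {l..a} g = si g a y"
      by (intro si_eq[symmetric] c) (auto simp: l_def)
  qed (auto simp: l_def)
qed

lemma si_cont: "continuous_on UNIV g \<Longrightarrow> continuous_on UNIV (si g a)"
  by (meson DERIV_continuous continuous_at_imp_continuous_on si_deriv)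

lemma si_deriv_eq: "continuous_on UNIV g \<Longrightarrow> deriv (si g a) = g"
  using si_deriv DERIV_imp_deriv by blast

lemma ftc_prod:
  fixes u v u' v' :: "real \<Rightarrow> real"
  assumes ab: "a \<le> b"
    and du: "\<And>x. (u has_real_derivative u' x) (at x)"
    and dv: "\<And>x. (v has_real_derivative v' x) (at x)"
    and cu: "continuous_on UNIV u'" and cv: "continuous_on UNIV v'"
  shows "integral {a..b} (\<lambda>x. u' x * v x) + integral {a..b} (\<lambda>x. u x * v' x) = u b * v b - u a * v a"
proof -
  have cu0: "continuous_on UNIV u" using du
    by (meson DERIV_continuous continuous_at_imp_continuous_on)
  have cv0: "continuous_on UNIV v" using dv
    by (meson DERIV_continuous continuous_at_imp_continuous_on)
  have "((\<lambda>x. u' x * v x + u x * v' x) has_integral (u b * v b - u a * v a)) {a..b}"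
  proof (rule fundamental_theorem_of_calculus[OF ab])
    fix x :: real assume "x \<in> {a..b}"
    have "((\<lambda>x. u x * v x) has_real_derivative u' x * v x + u x * v' x) (at x)"
      using DERIV_mult[OF du dv] by (simp add: algebra_simps)
    then show "((\<lambda>x. u x * v x) has_vector_derivative u' x * v x + u x * v' x) (at x within {a..b})"
      by (simp add: has_real_derivative_iff_has_vector_derivative has_vector_derivative_at_within)
  qed
  then have "integral {a..b} (\<lambda>x. u' x * v x + u x * v' x) = u b * v b - u a * v a"
    by (rule integral_unique)
  moreover have "integral {a..b} (\<lambda>x. u' x * v x + u x * v' x) =
      integral {a..b} (\<lambda>x. u' x * v x) + integral {a..b} (\<lambda>x. u x * v' x)"
    by (intro integral_add integrable_continuous_interval continuous_intros
        continuous_on_subset[OF cu] continuous_on_subset[OF cv] continuous_on_subset[OF cu0]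
        continuous_on_subset[OF cv0]) auto
  ultimately show ?thesis by simp
qed

lemma test_cont: "test_function \<phi> \<Longrightarrow> continuous_on UNIV \<phi>"
  using smooth_cont test_function_smooth by blast

lemma test_deriv: "test_function \<phi> \<Longrightarrow> test_function (deriv \<phi>)"
proof -
  assume t: "test_function \<phi>"
  then obtain R where R: "R > 0" "\<And>k x. \<bar>x\<bar> \<ge> R \<Longrightarrow> (deriv ^^ k) \<phi> x = 0"
    using test_support by blast
  have "{x. deriv \<phi> x \<noteq> 0} \<subseteq> cball 0 R"
    using R(2)[of _ 1] by (force simp: dist_real_def)
  then show ?thesis using t smooth_deriv bounded_subset[OF bounded_cball]
    unfolding test_function_smooth by blast
qed

lemma integral_zero_on:
  fixes g :: "real \<Rightarrow> real"
  assumes "\<And>x. x \<in> {a..b} \<Longrightarrow> g x = 0"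
  shows "integral {a..b} g = 0"
proof -
  have "integral {a..b} g = integral {a..b} (\<lambda>x. 0::real)"
    using assms by (intro integral_cong) auto
  then show ?thesis by simp
qed

lemma antiderivative_test:
  assumes t: "test_function \<psi>" and z: "integral\<^sup>L lborel \<psi> = 0"
  obtains \<Phi> where "test_function \<Phi>" "deriv \<Phi> = \<psi>"
    "integral\<^sup>L lborel \<Phi> = - integral\<^sup>L lborel (\<lambda>y. y * \<psi> y)"
proof -
  obtain R where R: "R > 0" "\<And>k x. \<bar>x\<bar> \<ge> R \<Longrightarrow> (deriv ^^ k) \<psi> x = 0"
    using test_support[OF t] by blast
  have R0: "\<And>x. \<bar>x\<bar> \<ge> R \<Longrightarrow> \<psi> x = 0" using R(2)[of _ 0] by simp
  have c: "continuous_on UNIV \<psi>" using test_cont[OF t] .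
  define \<Phi> where "\<Phi> = si \<psi> (- R)"
  have d: "deriv \<Phi> = \<psi>" unfolding \<Phi>_def by (rule si_deriv_eq[OF c])
  have D: "(\<Phi> has_real_derivative \<psi> x) (at x)" for x unfolding \<Phi>_def by (rule si_deriv[OF c])
  have int_int: "integral {-R..R} \<psi> = 0" using LB(2)[OF c R0] z by simp
  have int: "\<psi> integrable_on {u..v}" for u v
    by (rule integrable_continuous_real) (auto intro: continuous_on_subset[OF c])
  have P0: "\<Phi> x = 0" if x: "\<bar>x\<bar> \<ge> R" for x
  proof (cases "x \<le> - R")
    case True
    then have "\<Phi> x = - integral {x..-R} \<psi>"
      using R(1) by (auto simp: \<Phi>_def si_def)
    also have "integral {x..-R} \<psi> = 0"
      by (rule integral_zero_on) (use R0 True in auto)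
    finally show ?thesis by simp
  next
    case False
    then have xR: "x \<ge> R" using x by auto
    then have "\<Phi> x = integral {-R..x} \<psi>" using R(1) by (simp add: \<Phi>_def si_def)
    also have "\<dots> = integral {-R..R} \<psi> + integral {R..x} \<psi>"
      using xR R(1) by (intro Henstock_Kurzweil_Integration.integral_combine[symmetric] int) auto
    also have "integral {R..x} \<psi> = 0"
      by (rule integral_zero_on) (use R0 in auto)
    finally show ?thesis using int_int by simp
  qed
  have sm: "smooth \<Phi>"
    unfolding smooth_def
  proof (intro allI)
    fix k x
    show "(deriv ^^ k) \<Phi> differentiable (at x)"
    proof (cases k)
      case 0 then show ?thesis using D real_differentiable_def by auto
    next
      case (Suc m)
      then have "(deriv ^^ k) \<Phi> = (deriv ^^ m) \<psi>" by (simp only: funpow_Suc_right o_apply d)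
      then show ?thesis using t by (simp add: test_function_def)
    qed
  qed
  have "{x. \<Phi> x \<noteq> 0} \<subseteq> cball 0 R" using P0 by (force simp: dist_real_def)
  then have tP: "test_function \<Phi>" using sm bounded_subset[OF bounded_cball]
    unfolding test_function_smooth by blast
  have cP: "continuous_on UNIV \<Phi>" using test_cont[OF tP] .
  have fp: "integral {-R..R} (\<lambda>x. 1 * \<Phi> x) + integral {-R..R} (\<lambda>x. x * \<psi> x) = R * \<Phi> R - (-R) * \<Phi> (-R)"
    by (rule ftc_prod[where u = "\<lambda>x. x" and u' = "\<lambda>x. 1"]) (use R(1) D c in \<open>auto intro: derivative_eq_intros\<close>)
  have "integral\<^sup>L lborel \<Phi> = integral {-R..R} \<Phi>" by (rule LB(2)[OF cP P0])
  moreover have "integral\<^sup>L lborel (\<lambda>y. y * \<psi> y) = integral {-R..R} (\<lambda>y. y * \<psi> y)"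
    by (rule LB(2)) (auto intro!: continuous_intros c R0)
  ultimately have "integral\<^sup>L lborel \<Phi> = - integral\<^sup>L lborel (\<lambda>y. y * \<psi> y)"
    using fp P0[of R] P0[of "-R"] R(1) by simp
  then show ?thesis using that tP d by blast
qed

lemma double_antiderivative:
  assumes t: "test_function \<psi>" and z0: "integral\<^sup>L lborel \<psi> = 0"
    and z1: "integral\<^sup>L lborel (\<lambda>y. y * \<psi> y) = 0"
  obtains \<phi> where "test_function \<phi>" "deriv (deriv \<phi>) = \<psi>"
proof -
  obtain \<Phi> where P: "test_function \<Phi>" "deriv \<Phi> = \<psi>"
    "integral\<^sup>L lborel \<Phi> = - integral\<^sup>L lborel (\<lambda>y. y * \<psi> y)"
    using antiderivative_test[OF t z0] by blast
  have "integral\<^sup>L lborel \<Phi> = 0" using P(3) z1 by simp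
  then obtain \<phi> where "test_function \<phi>" "deriv \<phi> = \<Phi>"
    using antiderivative_test[OF P(1)] by blast
  then show ?thesis using that P(2) by blast
qed

lemma test_zero_outside:
  assumes "test_function \<phi>"
  obtains R where "R > 0" "\<And>x. \<bar>x\<bar> \<ge> R \<Longrightarrow> \<phi> x = 0"
  using test_support[OF assms] by (metis funpow_0)

lemma int_test:
  assumes t: "test_function \<phi>" and g: "continuous_on UNIV g"
  shows "integrable lborel (\<lambda>x. g x * \<phi> x)"
proof -
  obtain R where R: "R > 0" "\<And>x. \<bar>x\<bar> \<ge> R \<Longrightarrow> \<phi> x = 0" using test_zero_outside[OF t] by blast
  show ?thesis
    by (rule integrable_cont_support[where R = R]) (auto intro!: continuous_intros g test_cont[OF t] R(2))
qed

lemma int_test1: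
  assumes t: "test_function \<phi>"
  shows "integrable lborel \<phi>"
  using int_test[OF t, of "\<lambda>_. 1"] by simp

lemma int_testy:
  assumes t: "test_function \<phi>"
  shows "integrable lborel (\<lambda>y. y * \<phi> y)"
  using int_test[OF t, of "\<lambda>y. y"] by (simp add: continuous_on_id)

lemma fundamental_lemma:
  fixes g :: "real \<Rightarrow> real"
  assumes g: "continuous_on UNIV g"
    and z: "\<And>\<psi>. test_function \<psi> \<Longrightarrow> integral\<^sup>L lborel (\<lambda>x. g x * \<psi> x) = 0"
  shows "g x0 = 0"
proof (rule ccontr)
  assume ne: "g x0 \<noteq> 0"
  define s where "s = (if g x0 > 0 then 1 else -1 :: real)"
  have sg: "s * g x0 > 0" using ne by (auto simp: s_def)
  have "isCont (\<lambda>x. s * g x) x0" using g by (auto intro!: continuous_intros simp: continuous_on_eq_continuous_at)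
  then obtain e where e: "e > 0" "\<And>x. dist x x0 < e \<Longrightarrow> dist (s * g x) (s * g x0) < s * g x0"
    using sg by (metis continuous_at_eps_delta)
  have pos: "s * g x > 0" if "\<bar>x - x0\<bar> < e" for x
  proof -
    have "\<bar>s * g x - s * g x0\<bar> < s * g x0" using e(2)[of x] that by (simp add: dist_real_def)
    then show ?thesis using abs_less_iff[of "s * g x - s * g x0" "s * g x0"] by linarith
  qed
  define \<psi> where "\<psi> = bump x0 e"
  have t: "test_function \<psi>" using test_bump[OF e(1)] by (simp add: \<psi>_def)
  have nn: "s * g x * \<psi> x \<ge> 0" for x
  proof (cases "\<bar>x - x0\<bar> < e")
    case True then show ?thesis using pos[OF True] bump_nonneg[of x0 e x] by (simp add: \<psi>_def)
  next
    case False then show ?thesis using bump_zero[OF e(1), of x x0] by (simp add: \<psi>_def)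
  qed
  have zz: "s * g x * \<psi> x = 0" if "\<bar>x\<bar> \<ge> \<bar>x0\<bar> + e" for x
    using bump_zero[OF e(1), of x x0] that by (simp add: \<psi>_def)
  have "integral\<^sup>L lborel (\<lambda>x. s * g x * \<psi> x) > 0"
  proof (rule pos_integral[of _ "\<bar>x0\<bar> + e" x0])
    show "continuous_on UNIV (\<lambda>x. s * g x * \<psi> x)"
      by (intro continuous_intros g test_cont[OF t])
    show "0 < s * g x0 * \<psi> x0" using sg bump_pos[OF e(1)] by (simp add: \<psi>_def)
  qed (use nn zz in auto)
  moreover have "integral\<^sup>L lborel (\<lambda>x. s * g x * \<psi> x) = s * integral\<^sup>L lborel (\<lambda>x. g x * \<psi> x)"
    by (simp add: mult.assoc)
  ultimately show False using z[OF t] by simp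
qed

lemma weak_affine:
  fixes K :: "real \<Rightarrow> real"
  assumes K: "continuous_on UNIV K"
    and z: "\<And>\<phi>. test_function \<phi> \<Longrightarrow> integral\<^sup>L lborel (\<lambda>x. K x * deriv (deriv \<phi>) x) = 0"
  obtains \<alpha> \<beta> where "\<And>x. K x = \<alpha> + \<beta> * x"
proof -
  define e1 where "e1 = bump 0 1"
  define e2 where "e2 = bump 3 1"
  have t1: "test_function e1" and t2: "test_function e2"
    using test_bump[of 1] by (auto simp: e1_def e2_def)
  define m1 where "m1 = integral\<^sup>L lborel e1"
  define m2 where "m2 = integral\<^sup>L lborel e2"
  define n1 where "n1 = integral\<^sup>L lborel (\<lambda>y. y * e1 y)"
  define n2 where "n2 = integral\<^sup>L lborel (\<lambda>y. y * e2 y)"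
  have z1: "e1 y = 0" if "\<bar>y\<bar> \<ge> 1" for y using bump_zero[of 1 y 0] that by (simp add: e1_def)
  have z2: "e2 y = 0" if "\<bar>y - 3\<bar> \<ge> 1" for y using bump_zero[of 1 y 3] that by (simp add: e2_def)
  have nn1: "e1 y \<ge> 0" and nn2: "e2 y \<ge> 0" for y by (auto simp: e1_def e2_def bump_nonneg)
  have m1: "m1 > 0" unfolding m1_def
    by (rule pos_integral[of _ 4 0]) (use test_cont[OF t1] nn1 z1 bump_pos[of 1 0] in \<open>auto simp: e1_def\<close>)
  have m2: "m2 > 0" unfolding m2_def
    by (rule pos_integral[of _ 4 3]) (use test_cont[OF t2] nn2 z2 bump_pos[of 1 3] in \<open>auto simp: e2_def\<close>)
  have n1: "n1 \<le> m1" unfolding n1_def m1_def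
  proof (rule integral_mono[OF int_testy[OF t1] int_test1[OF t1]])
    fix y :: real show "y * e1 y \<le> e1 y"
      using z1[of y] nn1[of y] mult_right_mono[of y 1 "e1 y"] by (cases "\<bar>y\<bar> < 1") auto
  qed
  have n2: "2 * m2 \<le> n2" unfolding n2_def m2_def
  proof -
    have "integral\<^sup>L lborel (\<lambda>y. 2 * e2 y) \<le> integral\<^sup>L lborel (\<lambda>y. y * e2 y)"
    proof (rule integral_mono[OF _ int_testy[OF t2]])
      show "integrable lborel (\<lambda>y. 2 * e2 y)" using int_test1[OF t2] by simp
      fix y :: real show "2 * e2 y \<le> y * e2 y"
        using z2[of y] nn2[of y] mult_right_mono[of 2 y "e2 y"] by (cases "\<bar>y - 3\<bar> < 1") auto
    qed
    then show "2 * integral\<^sup>L lborel e2 \<le> integral\<^sup>L lborel (\<lambda>y. y * e2 y)" by simp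
  qed
  define D where "D = m1 * n2 - m2 * n1"
  have D: "D > 0"
  proof -
    have "m1 * n2 \<ge> m1 * (2 * m2)" using m1 n2 by (intro mult_left_mono) auto
    moreover have "m2 * n1 \<le> m2 * m1" using m2 n1 by (intro mult_left_mono) auto
    moreover have "m1 * m2 > 0" using m1 m2 by simp
    moreover have "m1 * (2 * m2) = 2 * (m1 * m2)" "m2 * m1 = m1 * m2" by simp_all
    ultimately show ?thesis unfolding D_def by linarith
  qed
  define k1 where "k1 = integral\<^sup>L lborel (\<lambda>x. K x * e1 x)"
  define k2 where "k2 = integral\<^sup>L lborel (\<lambda>x. K x * e2 x)"
  define \<alpha> where "\<alpha> = (n2 * k1 - n1 * k2) / D"
  define \<beta> where "\<beta> = (m1 * k2 - m2 * k1) / D"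
  have main: "integral\<^sup>L lborel (\<lambda>x. (K x - (\<alpha> + \<beta> * x)) * \<psi> x) = 0" if t: "test_function \<psi>" for \<psi>
  proof -
    define I where "I = integral\<^sup>L lborel \<psi>"
    define J where "J = integral\<^sup>L lborel (\<lambda>y. y * \<psi> y)"
    define c1 where "c1 = (n2 * I - m2 * J) / D"
    define c2 where "c2 = (m1 * J - n1 * I) / D"
    define \<psi>0 where "\<psi>0 = (\<lambda>x. 1 * \<psi> x + 1 * ((- c1) * e1 x + (- c2) * e2 x))"
    have t0: "test_function \<psi>0" unfolding \<psi>0_def by (intro test_lincomb t t1 t2)
    have i0: "integral\<^sup>L lborel \<psi>0 = I - c1 * m1 - c2 * m2"
      unfolding \<psi>0_def I_def m1_def m2_def
      using int_test1[OF t] int_test1[OF t1] int_test1[OF t2] by simp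
    have "c1 * m1 + c2 * m2 = ((n2 * I - m2 * J) * m1 + (m1 * J - n1 * I) * m2) / D"
      unfolding c1_def c2_def by (simp add: add_divide_distrib)
    also have "(n2 * I - m2 * J) * m1 + (m1 * J - n1 * I) * m2 = I * D"
      unfolding D_def by (simp add: algebra_simps)
    finally have "c1 * m1 + c2 * m2 = I" using D by simp
    then have z0: "integral\<^sup>L lborel \<psi>0 = 0" using i0 by simp
    have i1: "integral\<^sup>L lborel (\<lambda>y. y * \<psi>0 y) = J - c1 * n1 - c2 * n2"
    proof -
      have eq: "(\<lambda>y. y * \<psi>0 y) = (\<lambda>y. (y * \<psi> y - c1 * (y * e1 y)) - c2 * (y * e2 y))"
        by (auto simp: \<psi>0_def algebra_simps)
      show ?thesis unfolding eq J_def n1_def n2_def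
        using int_testy[OF t] int_testy[OF t1] int_testy[OF t2]
        by (simp add: integral_diff integrable_diff integrable_mult_right)
    qed
    have "c1 * n1 + c2 * n2 = ((n2 * I - m2 * J) * n1 + (m1 * J - n1 * I) * n2) / D"
      unfolding c1_def c2_def by (simp add: add_divide_distrib)
    also have "(n2 * I - m2 * J) * n1 + (m1 * J - n1 * I) * n2 = J * D"
      unfolding D_def by (simp add: algebra_simps)
    finally have "c1 * n1 + c2 * n2 = J" using D by simp
    then have z1: "integral\<^sup>L lborel (\<lambda>y. y * \<psi>0 y) = 0" using i1 by simp
    obtain \<phi> where \<phi>: "test_function \<phi>" "deriv (deriv \<phi>) = \<psi>0"
      using double_antiderivative[OF t0 z0 z1] by blast
    have "integral\<^sup>L lborel (\<lambda>x. K x * \<psi>0 x) = 0" using z[OF \<phi>(1)] \<phi>(2) by simp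
    moreover have "integral\<^sup>L lborel (\<lambda>x. K x * \<psi>0 x) = integral\<^sup>L lborel (\<lambda>x. K x * \<psi> x) - c1 * k1 - c2 * k2"
      unfolding \<psi>0_def k1_def k2_def
      using int_test[OF t K] int_test[OF t1 K] int_test[OF t2 K] by (simp add: algebra_simps)
    ultimately have Kpsi: "integral\<^sup>L lborel (\<lambda>x. K x * \<psi> x) = c1 * k1 + c2 * k2" by simp
    have "c1 * k1 + c2 * k2 = ((n2 * I - m2 * J) * k1 + (m1 * J - n1 * I) * k2) / D"
      unfolding c1_def c2_def by (simp add: add_divide_distrib)
    also have "(n2 * I - m2 * J) * k1 + (m1 * J - n1 * I) * k2 = (n2 * k1 - n1 * k2) * I + (m1 * k2 - m2 * k1) * J"
      by (simp add: algebra_simps)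
    also have "\<dots> / D = \<alpha> * I + \<beta> * J"
      unfolding \<alpha>_def \<beta>_def by (simp add: add_divide_distrib)
    finally have "c1 * k1 + c2 * k2 = \<alpha> * I + \<beta> * J" .
    moreover have "integral\<^sup>L lborel (\<lambda>x. (K x - (\<alpha> + \<beta> * x)) * \<psi> x)
        = integral\<^sup>L lborel (\<lambda>x. K x * \<psi> x) - \<alpha> * I - \<beta> * J"
    proof -
      have eq: "(\<lambda>x. (K x - (\<alpha> + \<beta> * x)) * \<psi> x) = (\<lambda>x. (K x * \<psi> x - \<alpha> * \<psi> x) - \<beta> * (x * \<psi> x))"
        by (auto simp: algebra_simps)
      show ?thesis unfolding eq I_def J_def
        using int_test[OF t K] int_test1[OF t] int_testy[OF t]
        by (simp add: integral_diff integrable_diff integrable_mult_right)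
    qed
    ultimately show ?thesis using Kpsi by simp
  qed
  have "K x - (\<alpha> + \<beta> * x) = 0" for x
    by (rule fundamental_lemma[where g = "\<lambda>x. K x - (\<alpha> + \<beta> * x)"])
       (auto intro!: continuous_intros K main)
  then show ?thesis using that by auto
qed

definition Hf :: "real \<Rightarrow> real \<Rightarrow> (real \<Rightarrow> real) \<Rightarrow> real \<Rightarrow> real" where
  "Hf lam T f z = (z\<^sup>2 + 1 / T\<^sup>2) * f z + si (\<lambda>s. 2 * s * f s) 0 z - lam\<^sup>2 * si (si f 0) 0 z"

lemma cont_integrable: "continuous_on UNIV (g :: real \<Rightarrow> real) \<Longrightarrow> g integrable_on {u..v}"
  by (rule integrable_continuous_real) (auto intro: continuous_on_subset)

lemma abs_part:
  fixes \<phi> \<phi>1 \<phi>2 :: "real \<Rightarrow> real"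
  assumes R: "R > 0"
    and d0: "\<And>x. (\<phi> has_real_derivative \<phi>1 x) (at x)"
    and d1: "\<And>x. (\<phi>1 has_real_derivative \<phi>2 x) (at x)"
    and c2: "continuous_on UNIV \<phi>2"
    and z0: "\<phi> R = 0" "\<phi> (-R) = 0" and z1: "\<phi>1 R = 0" "\<phi>1 (-R) = 0"
  shows "integral {-R..R} (\<lambda>z. \<bar>z\<bar> * \<phi>2 z) = 2 * \<phi> 0"
proof -
  have c1: "continuous_on UNIV \<phi>1" using d1 by (meson DERIV_continuous continuous_at_imp_continuous_on)
  have c0: "continuous_on UNIV \<phi>" using d0 by (meson DERIV_continuous continuous_at_imp_continuous_on)
  have i: "(\<lambda>z. \<bar>z\<bar> * \<phi>2 z) integrable_on {u..v}" for u v
    by (intro cont_integrable continuous_intros c2)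
  have did: "((\<lambda>x. x) has_real_derivative 1) (at x)" for x :: real by simp
  have dc: "((\<lambda>x. 1) has_real_derivative 0) (at x)" for x :: real by simp
  have A1: "integral {a..b} (\<lambda>x. 1 * \<phi>1 x) + integral {a..b} (\<lambda>x. x * \<phi>2 x) = b * \<phi>1 b - a * \<phi>1 a"
    if "a \<le> b" for a b
    by (rule ftc_prod[OF that did d1]) (auto intro: c2)
  have A2: "integral {a..b} (\<lambda>x. 0 * \<phi> x) + integral {a..b} (\<lambda>x. 1 * \<phi>1 x) = 1 * \<phi> b - 1 * \<phi> a"
    if "a \<le> b" for a b
    by (rule ftc_prod[OF that dc d0]) (auto intro: c1)
  have P: "integral {0..R} (\<lambda>z. \<bar>z\<bar> * \<phi>2 z) = \<phi> 0"
  proof -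
    have "integral {0..R} (\<lambda>z. \<bar>z\<bar> * \<phi>2 z) = integral {0..R} (\<lambda>z. z * \<phi>2 z)"
      by (rule Henstock_Kurzweil_Integration.integral_cong) auto
    then show ?thesis using A1[of 0 R] A2[of 0 R] R z0 z1 by simp
  qed
  have N: "integral {-R..0} (\<lambda>z. \<bar>z\<bar> * \<phi>2 z) = \<phi> 0"
  proof -
    have "integral {-R..0} (\<lambda>z. \<bar>z\<bar> * \<phi>2 z) = integral {-R..0} (\<lambda>z. - (z * \<phi>2 z))"
      by (rule Henstock_Kurzweil_Integration.integral_cong) auto
    then show ?thesis using A1[of "-R" 0] A2[of "-R" 0] R z0 z1 by simp
  qed
  have "integral {-R..0} (\<lambda>z. \<bar>z\<bar> * \<phi>2 z) + integral {0..R} (\<lambda>z. \<bar>z\<bar> * \<phi>2 z)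
        = integral {-R..R} (\<lambda>z. \<bar>z\<bar> * \<phi>2 z)"
    using R by (intro Henstock_Kurzweil_Integration.integral_combine i) auto
  then show ?thesis using P N by simp
qed

lemma dist_K:
  fixes lam T c :: real and f :: "real \<Rightarrow> real"
  assumes fc: "continuous_on UNIV f" and ds: "distr_solution lam T c f" and t: "test_function \<phi>"
  shows "integral\<^sup>L lborel (\<lambda>z. (Hf lam T f z - pi * c * \<bar>z\<bar>) * deriv (deriv \<phi>) z) = 0"
proof -
  define a where "a = 1 / T\<^sup>2"
  define \<phi>1 where "\<phi>1 = deriv \<phi>"
  define \<phi>2 where "\<phi>2 = deriv \<phi>1"
  have s0: "smooth \<phi>" using t test_function_smooth by blast
  have s1: "smooth \<phi>1" unfolding \<phi>1_def using smooth_deriv[OF s0] .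
  have s2: "smooth \<phi>2" unfolding \<phi>2_def using smooth_deriv[OF s1] .
  have d0: "(\<phi> has_real_derivative \<phi>1 x) (at x)" for x unfolding \<phi>1_def using smooth_has_deriv[OF s0] .
  have d1: "(\<phi>1 has_real_derivative \<phi>2 x) (at x)" for x unfolding \<phi>2_def using smooth_has_deriv[OF s1] .
  have c0: "continuous_on UNIV \<phi>" using smooth_cont[OF s0] .
  have c1: "continuous_on UNIV \<phi>1" using smooth_cont[OF s1] .
  have c2: "continuous_on UNIV \<phi>2" using smooth_cont[OF s2] .
  obtain R where R: "R > 0" "\<And>k x. \<bar>x\<bar> \<ge> R \<Longrightarrow> (deriv ^^ k) \<phi> x = 0"
    using test_support[OF t] by blast
  have z0: "\<phi> x = 0" if "\<bar>x\<bar> \<ge> R" for x using R(2)[OF that, of 0] by simp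
  have z1: "\<phi>1 x = 0" if "\<bar>x\<bar> \<ge> R" for x using R(2)[OF that, of 1] by (simp add: \<phi>1_def)
  have z2: "\<phi>2 x = 0" if "\<bar>x\<bar> \<ge> R" for x using R(2)[OF that, of 2] by (simp add: \<phi>1_def \<phi>2_def numeral_2_eq_2)
  have zR: "\<phi> R = 0" "\<phi> (-R) = 0" "\<phi>1 R = 0" "\<phi>1 (-R) = 0" using z0 z1 R(1) by auto
  have e1: "deriv (\<lambda>x. (x\<^sup>2 + 1 / T\<^sup>2) * \<phi> x) = (\<lambda>x. 2 * x * \<phi> x + (x\<^sup>2 + a) * \<phi>1 x)"
  proof
    fix x
    have "((\<lambda>x. (x\<^sup>2 + 1 / T\<^sup>2) * \<phi> x) has_real_derivative 2 * x * \<phi> x + (x\<^sup>2 + a) * \<phi>1 x) (at x)"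
      unfolding a_def by (auto intro!: derivative_eq_intros d0)
    then show "deriv (\<lambda>x. (x\<^sup>2 + 1 / T\<^sup>2) * \<phi> x) x = 2 * x * \<phi> x + (x\<^sup>2 + a) * \<phi>1 x"
      by (rule DERIV_imp_deriv)
  qed
  have e2: "deriv (\<lambda>x. 2 * x * \<phi> x + (x\<^sup>2 + a) * \<phi>1 x)
     = (\<lambda>x. 2 * \<phi> x + 4 * x * \<phi>1 x + (x\<^sup>2 + a) * \<phi>2 x)"
  proof
    fix x
    have "((\<lambda>x. 2 * x * \<phi> x + (x\<^sup>2 + a) * \<phi>1 x) has_real_derivative
        2 * \<phi> x + 4 * x * \<phi>1 x + (x\<^sup>2 + a) * \<phi>2 x) (at x)"
      by (auto intro!: derivative_eq_intros d0 d1 simp: algebra_simps)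
    then show "deriv (\<lambda>x. 2 * x * \<phi> x + (x\<^sup>2 + a) * \<phi>1 x) x = 2 * \<phi> x + 4 * x * \<phi>1 x + (x\<^sup>2 + a) * \<phi>2 x"
      by (rule DERIV_imp_deriv)
  qed
  have e3: "deriv (\<lambda>x. 6 * x * \<phi> x) = (\<lambda>x. 6 * \<phi> x + 6 * x * \<phi>1 x)"
  proof
    fix x
    have "((\<lambda>x. 6 * x * \<phi> x) has_real_derivative 6 * \<phi> x + 6 * x * \<phi>1 x) (at x)"
      by (auto intro!: derivative_eq_intros d0 simp: algebra_simps)
    then show "deriv (\<lambda>x. 6 * x * \<phi> x) x = 6 * \<phi> x + 6 * x * \<phi>1 x"
      by (rule DERIV_imp_deriv)
  qed
  define L where "L = (\<lambda>z. (z\<^sup>2 + a) * \<phi>2 z - 2 * z * \<phi>1 z - lam\<^sup>2 * \<phi> z)"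
  have hyp: "integral\<^sup>L lborel (\<lambda>z. f z * L z) = 2 * pi * c * \<phi> 0"
  proof -
    have "integral\<^sup>L lborel (\<lambda>z. f z * (deriv (deriv (\<lambda>x. (x\<^sup>2 + 1 / T\<^sup>2) * \<phi> x)) z
                     - deriv (\<lambda>x. 6 * x * \<phi> x) z + (4 - lam\<^sup>2) * \<phi> z)) = 2 * pi * c * \<phi> 0"
      using ds t unfolding distr_solution_def Let_def by blast
    moreover have "(\<lambda>z. f z * (deriv (deriv (\<lambda>x. (x\<^sup>2 + 1 / T\<^sup>2) * \<phi> x)) z
                     - deriv (\<lambda>x. 6 * x * \<phi> x) z + (4 - lam\<^sup>2) * \<phi> z)) = (\<lambda>z. f z * L z)"
      unfolding e1 e2 e3 L_def by (auto simp: algebra_simps)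
    ultimately show ?thesis by simp
  qed
  define F1 where "F1 = si f 0"
  define G2 where "G2 = si F1 0"
  define G1 where "G1 = si (\<lambda>s. 2 * s * f s) 0"
  have cg1: "continuous_on UNIV (\<lambda>s. 2 * s * f s)" by (intro continuous_intros fc)
  have dF1: "(F1 has_real_derivative f x) (at x)" for x unfolding F1_def by (rule si_deriv[OF fc])
  have cF1: "continuous_on UNIV F1" unfolding F1_def by (rule si_cont[OF fc])
  have dG2: "(G2 has_real_derivative F1 x) (at x)" for x unfolding G2_def by (rule si_deriv[OF cF1])
  have cG2: "continuous_on UNIV G2" unfolding G2_def by (rule si_cont[OF cF1])
  have dG1: "(G1 has_real_derivative 2 * x * f x) (at x)" for x unfolding G1_def by (rule si_deriv[OF cg1])
  have cG1: "continuous_on UNIV G1" unfolding G1_def by (rule si_cont[OF cg1])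
  have E1: "integral {-R..R} (\<lambda>x. 2 * x * f x * \<phi>1 x) + integral {-R..R} (\<lambda>x. G1 x * \<phi>2 x) = 0"
    using ftc_prod[of "-R" R G1 "\<lambda>x. 2 * x * f x" \<phi>1 \<phi>2] R(1) dG1 d1 cg1 c2 zR by simp
  have E2: "integral {-R..R} (\<lambda>x. F1 x * \<phi>1 x) + integral {-R..R} (\<lambda>x. G2 x * \<phi>2 x) = 0"
    using ftc_prod[of "-R" R G2 F1 \<phi>1 \<phi>2] R(1) dG2 d1 cF1 c2 zR by simp
  have E3: "integral {-R..R} (\<lambda>x. f x * \<phi> x) + integral {-R..R} (\<lambda>x. F1 x * \<phi>1 x) = 0"
    using ftc_prod[of "-R" R F1 f \<phi> \<phi>1] R(1) dF1 d0 fc c1 zR by simp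
  have E4: "integral {-R..R} (\<lambda>z. \<bar>z\<bar> * \<phi>2 z) = 2 * \<phi> 0"
    by (rule abs_part[OF R(1) d0 d1 c2 zR])
  have Hf_eq: "Hf lam T f z = (z\<^sup>2 + a) * f z + G1 z - lam\<^sup>2 * G2 z" for z
    by (simp add: Hf_def a_def G1_def G2_def F1_def)
  have cL: "continuous_on UNIV L" unfolding L_def by (intro continuous_intros c0 c1 c2)
  have lhs: "integral\<^sup>L lborel (\<lambda>z. f z * L z) = integral {-R..R} (\<lambda>z. f z * L z)"
    by (rule LB(2)) (auto intro!: continuous_intros fc c0 c1 c2 simp: L_def z0 z1 z2)
  have cH: "continuous_on UNIV (\<lambda>z. Hf lam T f z - pi * c * \<bar>z\<bar>)"
    unfolding Hf_eq by (intro continuous_intros fc cG1 cG2)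
  have rhs: "integral\<^sup>L lborel (\<lambda>z. (Hf lam T f z - pi * c * \<bar>z\<bar>) * deriv (deriv \<phi>) z)
      = integral {-R..R} (\<lambda>z. (Hf lam T f z - pi * c * \<bar>z\<bar>) * \<phi>2 z)"
    unfolding \<phi>2_def[symmetric] \<phi>1_def[symmetric]
    by (rule LB(2)) (auto intro!: continuous_intros cH c2 simp: z2)
  have I: "\<And>g :: real \<Rightarrow> real. continuous_on UNIV g \<Longrightarrow> g integrable_on {-R..R}" using cont_integrable by blast
  have split1: "integral {-R..R} (\<lambda>z. (Hf lam T f z - pi * c * \<bar>z\<bar>) * \<phi>2 z)
      = integral {-R..R} (\<lambda>z. (z\<^sup>2 + a) * f z * \<phi>2 z) + integral {-R..R} (\<lambda>z. G1 z * \<phi>2 z)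
        - lam\<^sup>2 * integral {-R..R} (\<lambda>z. G2 z * \<phi>2 z) - pi * c * integral {-R..R} (\<lambda>z. \<bar>z\<bar> * \<phi>2 z)"
  proof -
    have "(\<lambda>z. (Hf lam T f z - pi * c * \<bar>z\<bar>) * \<phi>2 z) = (\<lambda>z. (((z\<^sup>2 + a) * f z * \<phi>2 z + G1 z * \<phi>2 z)
        - lam\<^sup>2 * (G2 z * \<phi>2 z)) - pi * c * (\<bar>z\<bar> * \<phi>2 z))"
      by (auto simp: Hf_eq algebra_simps)
    then show ?thesis
      by (simp add: integral_diff integral_add I integrable_diff integrable_add continuous_intros
          fc c2 cG1 cG2)
  qed
  have split2: "integral {-R..R} (\<lambda>z. f z * L z)
      = integral {-R..R} (\<lambda>z. (z\<^sup>2 + a) * f z * \<phi>2 z) - integral {-R..R} (\<lambda>x. 2 * x * f x * \<phi>1 x)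
        - lam\<^sup>2 * integral {-R..R} (\<lambda>x. f x * \<phi> x)"
  proof -
    have "(\<lambda>z. f z * L z) = (\<lambda>z. ((z\<^sup>2 + a) * f z * \<phi>2 z - 2 * z * f z * \<phi>1 z) - lam\<^sup>2 * (f z * \<phi> z))"
      by (auto simp: L_def algebra_simps)
    then show ?thesis
      by (simp add: integral_diff I integrable_diff continuous_intros fc c0 c1 c2)
  qed
  have CF: "integral {-R..R} (\<lambda>x. G2 x * \<phi>2 x) = integral {-R..R} (\<lambda>x. f x * \<phi> x)"
    using E2 E3 by linarith
  have BD: "integral {-R..R} (\<lambda>x. G1 x * \<phi>2 x) = - integral {-R..R} (\<lambda>x. 2 * x * f x * \<phi>1 x)"
    using E1 by linarith
  have S2: "integral {-R..R} (\<lambda>z. (z\<^sup>2 + a) * f z * \<phi>2 z) - integral {-R..R} (\<lambda>x. 2 * x * f x * \<phi>1 x)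
        - lam\<^sup>2 * integral {-R..R} (\<lambda>x. f x * \<phi> x) = 2 * pi * c * \<phi> 0"
    using split2 lhs hyp by simp
  show ?thesis
    unfolding rhs split1 E4 CF BD using S2 by simp
qed

lemma divp: "(P::real) \<noteq> 0 \<Longrightarrow> A = P * X \<Longrightarrow> A / P\<^sup>2 = X / P"
  by (simp add: power2_eq_square)

locale cl =
  fixes f F1 G1 G2 :: "real \<Rightarrow> real" and lam a :: real
  assumes a: "a > 0" and lam: "lam > 2"
    and dF1: "\<And>x. (F1 has_real_derivative f x) (at x)"
    and dG1: "\<And>x. (G1 has_real_derivative 2 * x * f x) (at x)"
    and dG2: "\<And>x. (G2 has_real_derivative F1 x) (at x)"
begin

definition N :: "real \<Rightarrow> real \<Rightarrow> real \<Rightarrow> real" where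
  "N \<alpha> b z = \<alpha> + b * z - G1 z + lam\<^sup>2 * G2 z"

definition dd :: "real \<Rightarrow> real \<Rightarrow> real" where
  "dd b z = (b - 4 * z * f z + lam\<^sup>2 * F1 z) / (z\<^sup>2 + a)"

lemma p_pos: "z\<^sup>2 + a > 0" using a by (simp add: add_nonneg_pos)

lemma dQ: "((\<lambda>z. N \<alpha> b z / (z\<^sup>2 + a)) has_real_derivative
    ((b - 2 * z * f z + lam\<^sup>2 * F1 z) * (z\<^sup>2 + a) - N \<alpha> b z * (2 * z)) / (z\<^sup>2 + a)\<^sup>2) (at z)"
proof -
  have "((\<lambda>z. N \<alpha> b z) has_real_derivative b - 2 * z * f z + lam\<^sup>2 * F1 z) (at z)"
    unfolding N_def by (auto intro!: derivative_eq_intros dG1 dG2)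
  then show ?thesis
    using p_pos[of z]
    by (auto intro!: derivative_eq_intros simp: power2_eq_square)
qed

lemma df:
  assumes I: "open I" "m \<in> I" and eq: "\<And>z. z \<in> I \<Longrightarrow> (z\<^sup>2 + a) * f z = N \<alpha> b z"
  shows "(f has_real_derivative dd b m) (at m)"
proof -
  have pm: "m\<^sup>2 + a > 0" by (rule p_pos)
  have "((b - 2 * m * f m + lam\<^sup>2 * F1 m) * (m\<^sup>2 + a) - N \<alpha> b m * (2 * m)) / (m\<^sup>2 + a)\<^sup>2 = dd b m"
  proof -
    have "((b - 2 * m * f m + lam\<^sup>2 * F1 m) * (m\<^sup>2 + a) - ((m\<^sup>2 + a) * f m) * (2 * m))
        = (m\<^sup>2 + a) * (b - 4 * m * f m + lam\<^sup>2 * F1 m)" by (simp add: algebra_simps)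
    note E = this
    have "((b - 2 * m * f m + lam\<^sup>2 * F1 m) * (m\<^sup>2 + a) - ((m\<^sup>2 + a) * f m) * (2 * m)) / (m\<^sup>2 + a)\<^sup>2
        = dd b m"
      unfolding dd_def by (rule divp[OF _ E]) (use pm in simp)
    then show ?thesis unfolding eq[OF I(2), symmetric] .
  qed
  then have D: "((\<lambda>z. N \<alpha> b z / (z\<^sup>2 + a)) has_real_derivative dd b m) (at m)"
    using dQ[of \<alpha> b m] by simp
  show ?thesis
  proof (rule has_field_derivative_transform_within_open[OF D I])
    fix z assume "z \<in> I"
    then show "N \<alpha> b z / (z\<^sup>2 + a) = f z" using eq p_pos[of z]
      by (metis nonzero_mult_div_cancel_left less_irrefl)
  qed
qed

lemma ddd:
  assumes I: "open I" "m \<in> I" and eq: "\<And>z. z \<in> I \<Longrightarrow> (z\<^sup>2 + a) * f z = N \<alpha> b z"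
    and z: "dd b m = 0"
  shows "(dd b has_real_derivative (lam\<^sup>2 - 4) * f m / (m\<^sup>2 + a)) (at m)"
proof -
  have fm: "(f has_real_derivative 0) (at m)" using df[OF I eq] z by simp
  have num0: "b - 4 * m * f m + lam\<^sup>2 * F1 m = 0"
    using z p_pos[of m] by (simp add: dd_def)
  have "((\<lambda>z. (b - 4 * z * f z + lam\<^sup>2 * F1 z) / (z\<^sup>2 + a)) has_real_derivative
      ((- 4 * f m - 4 * m * 0 + lam\<^sup>2 * f m) * (m\<^sup>2 + a) - (b - 4 * m * f m + lam\<^sup>2 * F1 m) * (2 * m))
      / (m\<^sup>2 + a)\<^sup>2) (at m)"
    using p_pos[of m]
    by (auto intro!: derivative_eq_intros fm dF1 simp: power2_eq_square)
  moreover have "((- 4 * f m - 4 * m * 0 + lam\<^sup>2 * f m) * (m\<^sup>2 + a) - (b - 4 * m * f m + lam\<^sup>2 * F1 m) * (2 * m))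
      / (m\<^sup>2 + a)\<^sup>2 = (lam\<^sup>2 - 4) * f m / (m\<^sup>2 + a)"
  proof -
    have "((- 4 * f m - 4 * m * 0 + lam\<^sup>2 * f m) * (m\<^sup>2 + a) - 0 * (2 * m))
        = (m\<^sup>2 + a) * ((lam\<^sup>2 - 4) * f m)" by (simp add: algebra_simps)
    note E = this
    have "((- 4 * f m - 4 * m * 0 + lam\<^sup>2 * f m) * (m\<^sup>2 + a) - 0 * (2 * m)) / (m\<^sup>2 + a)\<^sup>2
        = (lam\<^sup>2 - 4) * f m / (m\<^sup>2 + a)"
      by (rule divp[OF _ E]) (use p_pos[of m] in simp)
    then show ?thesis unfolding num0 .
  qed
  ultimately show ?thesis unfolding dd_def by simp
qed

lemma no_pos_max:
  assumes I: "open I" "m \<in> I" and eq: "\<And>z. z \<in> I \<Longrightarrow> (z\<^sup>2 + a) * f z = N \<alpha> b z"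
    and pos: "f m > 0" and d: "d > 0" and mx: "\<And>y. \<bar>y - m\<bar> < d \<Longrightarrow> f y \<le> f m"
  shows False
proof -
  have D: "(f has_real_derivative dd b m) (at m)" by (rule df[OF I eq])
  have z: "dd b m = 0"
    by (rule DERIV_local_max[OF D d]) (use mx in \<open>auto simp: abs_minus_commute\<close>)
  have l: "(lam\<^sup>2 - 4) * f m / (m\<^sup>2 + a) > 0"
  proof -
    have "lam\<^sup>2 > 2\<^sup>2" using lam by (intro power_strict_mono) auto
    then show ?thesis using pos p_pos[of m] by simp
  qed
  obtain d1 where d1: "d1 > 0" "\<And>h. h > 0 \<Longrightarrow> h < d1 \<Longrightarrow> dd b m < dd b (m + h)"
    using DERIV_pos_inc_right[OF ddd[OF I eq z] l] by blast
  obtain e where e: "e > 0" "ball m e \<subseteq> I" using I openE by blast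
  define h where "h = min d (min d1 e) / 2"
  have h: "h > 0" "h < d" "h < d1" "h < e" using d d1 e by (auto simp: h_def)
  have der: "(f has_real_derivative dd b x) (at x)" if "m \<le> x" "x \<le> m + h" for x
  proof (rule df[OF I(1) _ eq])
    show "x \<in> I" using e(2) that h by (auto simp: dist_real_def)
  qed
  obtain \<xi> where \<xi>: "m < \<xi>" "\<xi> < m + h" "f (m + h) - f m = (m + h - m) * dd b \<xi>"
    using MVT2[of m "m + h" f "dd b"] der h(1) by auto
  have "dd b \<xi> > 0" using d1(2)[of "\<xi> - m"] \<xi> h z by auto
  then have "h * dd b \<xi> > 0" using h by (simp add: mult_pos_pos)
  then have "f (m + h) > f m" using \<xi> by simp
  moreover have "f (m + h) \<le> f m" using mx[of "m + h"] h by simp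
  ultimately show False by simp
qed

lemma no_neg_min:
  assumes I: "open I" "m \<in> I" and eq: "\<And>z. z \<in> I \<Longrightarrow> (z\<^sup>2 + a) * f z = N \<alpha> b z"
    and neg: "f m < 0" and d: "d > 0" and mn: "\<And>y. \<bar>y - m\<bar> < d \<Longrightarrow> f m \<le> f y"
  shows False
proof -
  have D: "(f has_real_derivative dd b m) (at m)" by (rule df[OF I eq])
  have z: "dd b m = 0"
    by (rule DERIV_local_min[OF D d]) (use mn in \<open>auto simp: abs_minus_commute\<close>)
  have l: "(lam\<^sup>2 - 4) * f m / (m\<^sup>2 + a) < 0"
  proof -
    have "lam\<^sup>2 > 2\<^sup>2" using lam by (intro power_strict_mono) auto
    then have "(lam\<^sup>2 - 4) * f m < 0" using neg by (simp add: mult_pos_neg)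
    then show ?thesis using p_pos[of m] by (simp add: divide_neg_pos)
  qed
  obtain d1 where d1: "d1 > 0" "\<And>h. h > 0 \<Longrightarrow> h < d1 \<Longrightarrow> dd b m > dd b (m + h)"
    using DERIV_neg_dec_right[OF ddd[OF I eq z] l] by blast
  obtain e where e: "e > 0" "ball m e \<subseteq> I" using I openE by blast
  define h where "h = min d (min d1 e) / 2"
  have h: "h > 0" "h < d" "h < d1" "h < e" using d d1 e by (auto simp: h_def)
  have der: "(f has_real_derivative dd b x) (at x)" if "m \<le> x" "x \<le> m + h" for x
  proof (rule df[OF I(1) _ eq])
    show "x \<in> I" using e(2) that h by (auto simp: dist_real_def)
  qed
  obtain \<xi> where \<xi>: "m < \<xi>" "\<xi> < m + h" "f (m + h) - f m = (m + h - m) * dd b \<xi>"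
    using MVT2[of m "m + h" f "dd b"] der h(1) by auto
  have "dd b \<xi> < 0" using d1(2)[of "\<xi> - m"] \<xi> h z by auto
  then have "h * dd b \<xi> < 0" using h by (simp add: mult_pos_neg)
  then have "f (m + h) < f m" using \<xi> by simp
  moreover have "f m \<le> f (m + h)" using mn[of "m + h"] h by simp
  ultimately show False by simp
qed

end

theorem proposition3p3:
  fixes lam T c :: real and f :: "real \<Rightarrow> real"
  assumes "lam > 2" and "T > 0" and "c \<ge> 0"
    and "continuous_on UNIV f"
    and "distr_solution lam T c f"
    and "(f \<longlongrightarrow> 0) at_top" and "(f \<longlongrightarrow> 0) at_bot"
  shows "(\<forall>x y. x \<le> y \<and> y \<le> 0 \<longrightarrow> f y \<le> f x) \<and>
         (\<forall>x y. 0 \<le> x \<and> x \<le> y \<longrightarrow> f x \<le> f y)"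
proof -
  note lam = assms(1) and T = assms(2) and c = assms(3) and fc = assms(4) and ds = assms(5)
    and ltop = assms(6) and lbot = assms(7)
  define a where "a = 1 / T\<^sup>2"
  have a: "a > 0" using T by (simp add: a_def)
  define F1 where "F1 = si f 0"
  define G2 where "G2 = si F1 0"
  define G1 where "G1 = si (\<lambda>s. 2 * s * f s) 0"
  have cg1: "continuous_on UNIV (\<lambda>s. 2 * s * f s)" by (intro continuous_intros fc)
  have dF1: "(F1 has_real_derivative f x) (at x)" for x unfolding F1_def by (rule si_deriv[OF fc])
  have cF1: "continuous_on UNIV F1" unfolding F1_def by (rule si_cont[OF fc])
  have dG2: "(G2 has_real_derivative F1 x) (at x)" for x unfolding G2_def by (rule si_deriv[OF cF1])
  have cG2: "continuous_on UNIV G2" unfolding G2_def by (rule si_cont[OF cF1])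
  have dG1: "(G1 has_real_derivative 2 * x * f x) (at x)" for x unfolding G1_def by (rule si_deriv[OF cg1])
  have cG1: "continuous_on UNIV G1" unfolding G1_def by (rule si_cont[OF cg1])
  have F10: "F1 0 = 0" "G1 0 = 0" "G2 0 = 0" by (simp_all add: F1_def G1_def G2_def si_base)
  have Hf_eq: "Hf lam T f z = (z\<^sup>2 + a) * f z + G1 z - lam\<^sup>2 * G2 z" for z
    by (simp add: Hf_def a_def G1_def G2_def F1_def)
  have cK: "continuous_on UNIV (\<lambda>z. Hf lam T f z - pi * c * \<bar>z\<bar>)"
    unfolding Hf_eq by (intro continuous_intros fc cG1 cG2)
  obtain \<alpha> \<beta> where ab: "\<And>z. Hf lam T f z - pi * c * \<bar>z\<bar> = \<alpha> + \<beta> * z"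
    using weak_affine[OF cK dist_K[OF fc ds]] by blast
  interpret cl f F1 G1 G2 lam a
    by unfold_locales (use a lam dF1 dG1 dG2 in auto)
  have eqz: "(z\<^sup>2 + a) * f z = \<alpha> + \<beta> * z + pi * c * \<bar>z\<bar> - G1 z + lam\<^sup>2 * G2 z" for z
    using ab[of z] unfolding Hf_eq by simp
  define bp where "bp = \<beta> + pi * c"
  define bm where "bm = \<beta> - pi * c"
  have eqp: "(z\<^sup>2 + a) * f z = N \<alpha> bp z" if "z \<ge> 0" for z
    using eqz[of z] that by (simp add: N_def bp_def algebra_simps)
  have eqm: "(z\<^sup>2 + a) * f z = N \<alpha> bm z" if "z \<le> 0" for z
    using eqz[of z] that by (simp add: N_def bm_def algebra_simps)
  have fQ: "f z = N \<alpha> b z / (z\<^sup>2 + a)" if "(z\<^sup>2 + a) * f z = N \<alpha> b z" for z b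
    using that p_pos[of z] by (metis nonzero_mult_div_cancel_left less_irrefl)
  have nonpos: "f x0 \<le> 0" for x0
  proof (rule ccontr)
    assume "\<not> f x0 \<le> 0"
    then have fx0: "f x0 > 0" by simp
    obtain R1 where R1: "\<And>x. x \<ge> R1 \<Longrightarrow> \<bar>f x\<bar> < f x0"
      using tendstoD[OF ltop fx0] by (auto simp: eventually_at_top_linorder dist_real_def)
    obtain R2 where R2: "\<And>x. x \<le> R2 \<Longrightarrow> \<bar>f x\<bar> < f x0"
      using tendstoD[OF lbot fx0] by (auto simp: eventually_at_bot_linorder dist_real_def)
    define R where "R = \<bar>R1\<bar> + \<bar>R2\<bar> + \<bar>x0\<bar> + 1"
    have "\<exists>m\<in>{-R..R}. \<forall>y\<in>{-R..R}. f y \<le> f m"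
      by (rule continuous_attains_sup) (auto simp: R_def intro: continuous_on_subset[OF fc])
    then obtain m where m: "m \<in> {-R..R}" "\<And>y. y \<in> {-R..R} \<Longrightarrow> f y \<le> f m"
      by blast
    have "x0 \<in> {-R..R}" by (auto simp: R_def)
    then have fm0: "f m \<ge> f x0" using m by blast
    have gmax: "f y \<le> f m" for y
    proof (cases "y \<in> {-R..R}")
      case True then show ?thesis using m by blast
    next
      case False
      then have "y > R \<or> y < -R" by auto
      then have "y \<ge> R1 \<or> y \<le> R2" unfolding R_def by auto
      then have "\<bar>f y\<bar> < f x0" using R1 R2 by blast
      then show ?thesis using fm0 by simp
    qed
    have fmpos: "f m > 0" using fm0 fx0 by simp
    consider "m > 0" | "m < 0" | "m = 0" by linarith
    then show False
    proof cases
      case 1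
      show False
        by (rule no_pos_max[of "{0<..}" m \<alpha> bp 1]) (use 1 eqp fmpos gmax in auto)
    next
      case 2
      show False
        by (rule no_pos_max[of "{..<0}" m \<alpha> bm 1]) (use 2 eqm fmpos gmax in auto)
    next
      case 3
      have Dp: "((\<lambda>z. N \<alpha> bp z / (z\<^sup>2 + a)) has_real_derivative bp / a) (at 0)"
        using dQ[of \<alpha> bp 0] F10 a by (simp add: power2_eq_square)
      have Dm: "((\<lambda>z. N \<alpha> bm z / (z\<^sup>2 + a)) has_real_derivative bm / a) (at 0)"
        using dQ[of \<alpha> bm 0] F10 a by (simp add: power2_eq_square)
      have bp0: "bp \<le> 0"
      proof (rule ccontr)
        assume "\<not> bp \<le> 0"
        then have "bp / a > 0" using a by simp
        then obtain d where d: "d > 0" "\<And>h. h > 0 \<Longrightarrow> h < d \<Longrightarrow>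
            N \<alpha> bp 0 / (0\<^sup>2 + a) < N \<alpha> bp (0 + h) / ((0 + h)\<^sup>2 + a)"
          using DERIV_pos_inc_right[OF Dp] by blast
        have "f 0 < f (d / 2)"
          using d(2)[of "d/2"] d(1) fQ[OF eqp[of 0]] fQ[OF eqp[of "d/2"]] by simp
        then show False using gmax[of "d/2"] 3 by simp
      qed
      have bm0: "bm \<ge> 0"
      proof (rule ccontr)
        assume "\<not> bm \<ge> 0"
        then have "bm / a < 0" using a by (simp add: divide_neg_pos)
        then obtain d where d: "d > 0" "\<And>h. h > 0 \<Longrightarrow> h < d \<Longrightarrow>
            N \<alpha> bm 0 / (0\<^sup>2 + a) < N \<alpha> bm (0 - h) / ((0 - h)\<^sup>2 + a)"
          using DERIV_neg_dec_left[OF Dm] by blast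
        have "f 0 < f (- (d / 2))"
          using d(2)[of "d/2"] d(1) fQ[OF eqm[of 0]] fQ[OF eqm[of "- (d/2)"]] by simp
        then show False using gmax[of "- (d/2)"] 3 by simp
      qed
      have "pi * c \<le> 0" using bp0 bm0 unfolding bp_def bm_def by linarith
      then have c0: "c = 0" using c pi_gt_zero by (simp add: mult_le_0_iff)
      have eqa: "(z\<^sup>2 + a) * f z = N \<alpha> \<beta> z" for z
        using eqz[of z] c0 by (simp add: N_def algebra_simps)
      show False
        by (rule no_pos_max[of UNIV m \<alpha> \<beta> 1]) (use eqa fmpos gmax in auto)
    qed
  qed
  have right: "f x \<le> f y" if xy: "0 \<le> x" "x \<le> y" for x y
  proof (rule ccontr)
    assume "\<not> f x \<le> f y"
    then have lt: "f y < f x" by simp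
    then have fy: "f y < 0" using nonpos[of x] by simp
    have "- f y > 0" using fy by simp
    from tendstoD[OF ltop this] obtain R1 where R1: "\<And>z. z \<ge> R1 \<Longrightarrow> \<bar>f z\<bar> < - f y"
      by (auto simp: eventually_at_top_linorder dist_real_def)
    define R where "R = max R1 y"
    have "\<exists>m\<in>{x..R}. \<forall>z\<in>{x..R}. f m \<le> f z"
      by (rule continuous_attains_inf) (use xy in \<open>auto simp: R_def intro: continuous_on_subset[OF fc]\<close>)
    then obtain m where m: "m \<in> {x..R}" "\<And>z. z \<in> {x..R} \<Longrightarrow> f m \<le> f z"
      by blast
    have fmy: "f m \<le> f y" using m xy by (auto simp: R_def)
    have mx: "m > x" using m(1) fmy lt by (cases "m = x") auto
    have gmin: "f m \<le> f z" if "z \<ge> x" for z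
    proof (cases "z \<le> R")
      case True then show ?thesis using m that by auto
    next
      case False
      then have "\<bar>f z\<bar> < - f y" using R1 by (simp add: R_def)
      then show ?thesis using fmy by simp
    qed
    show False
    proof (rule no_neg_min[of "{0<..}" m \<alpha> bp "m - x"])
      show "f m < 0" using fmy fy by simp
      fix z assume "\<bar>z - m\<bar> < m - x"
      then show "f m \<le> f z" using gmin by simp
    qed (use mx xy eqp in auto)
  qed
  have left: "f y \<le> f x" if xy: "x \<le> y" "y \<le> 0" for x y
  proof (rule ccontr)
    assume "\<not> f y \<le> f x"
    then have lt: "f x < f y" by simp
    then have fx: "f x < 0" using nonpos[of y] by simp
    have "- f x > 0" using fx by simp
    from tendstoD[OF lbot this] obtain R2 where R2: "\<And>z. z \<le> R2 \<Longrightarrow> \<bar>f z\<bar> < - f x"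
      by (auto simp: eventually_at_bot_linorder dist_real_def)
    define R where "R = min R2 x"
    have "\<exists>m\<in>{R..y}. \<forall>z\<in>{R..y}. f m \<le> f z"
      by (rule continuous_attains_inf) (use xy in \<open>auto simp: R_def intro: continuous_on_subset[OF fc]\<close>)
    then obtain m where m: "m \<in> {R..y}" "\<And>z. z \<in> {R..y} \<Longrightarrow> f m \<le> f z"
      by blast
    have fmx: "f m \<le> f x" using m xy by (auto simp: R_def)
    have my: "m < y" using m(1) fmx lt by (cases "m = y") auto
    have gmin: "f m \<le> f z" if "z \<le> y" for z
    proof (cases "z \<ge> R")
      case True then show ?thesis using m that by auto
    next
      case False
      then have "\<bar>f z\<bar> < - f x" using R2 by (simp add: R_def)
      then show ?thesis using fmx by simp
    qed
    show False
    proof (rule no_neg_min[of "{..<0}" m \<alpha> bm "y - m"])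
      show "f m < 0" using fmx fx by simp
      fix z assume "\<bar>z - m\<bar> < y - m"
      then show "f m \<le> f z" using gmin by simp
    qed (use my xy eqm in auto)
  qed
  show ?thesis using left right by blast
qed

end
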